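(* For every $n\ge1$, $\hat r_n\le\frac85$.
   Context: Equal responsibilities $1/n$, chores $e_1,e_2,\ldots,e_m$. A picking order is $S=(S_1,\ldots,S_m)\in[n]^m$; it allocates $A_i(S)=\{e_r:S_r=i\}$ to agent $i$. For an agent $i$ with additive disvaluation $c_i$ satisfying $c_i(e_1)\ge c_i(e_2)\ge\cdots$, let $CS_i=\max\{\frac1n c_i(\{e_1,\ldots,e_m\}),c_i(e_1),c_i(e_n)+c_i(e_{n+1})\}$ (with $c_i(e_j)=0$ for $j>m$). Let $r_{n,m}(S)=\sup_{i}\sup_{c_i}c_i(A_i(S))/CS_i$, the supremum over agents and over such non-increasing additive $c_i$. $S$ is a ridge picking order if $m\ge 2n$, $S_r=r$ for $1\le r\le n$ and $S_{n+r}=n-r+1$ for $1\le r\le n$ (agent $i$ gets $e_i$ and $e_{2n-i+1}$). Let $\hat r_{n,m}=\min\{r_{n,m}(S):S\text{ a ridge picking order of length }m\}$ and $\hat r_n=\sup_{m\ge 2n}\hat r_{n,m}$. *)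

theory Defs
  imports Complex_Main "HOL-Library.Extended_Real"
begin

(* Agents are 1..n, chores are e_1..e_m, identified with indices 1..m.
   A picking order of length m is a list S with S!(r-1) = S_r in {1..n}. *)

definition picking_order :: "nat \<Rightarrow> nat \<Rightarrow> nat list \<Rightarrow> bool" where
  "picking_order n m S \<longleftrightarrow> length S = m \<and> set S \<subseteq> {1..n}"

definition alloc :: "nat list \<Rightarrow> nat \<Rightarrow> nat set" where
  "alloc S i = {r. 1 \<le> r \<and> r \<le> length S \<and> S ! (r - 1) = i}"

(* additive disvaluation over chores e_1..e_m, given by c j = c_i(e_j):
   nonnegative and non-increasing in j *)
definition valid_disval :: "nat \<Rightarrow> (nat \<Rightarrow> real) \<Rightarrow> bool" where
  "valid_disval m c \<longleftrightarrow> (\<forall>j. 1 \<le> j \<longrightarrow> j \<le> m \<longrightarrow> 0 \<le> c j)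
     \<and> (\<forall>j k. 1 \<le> j \<longrightarrow> j \<le> k \<longrightarrow> k \<le> m \<longrightarrow> c k \<le> c j)"

(* c_i(e_j), with the convention c_i(e_j) = 0 for j > m *)
definition cext :: "nat \<Rightarrow> (nat \<Rightarrow> real) \<Rightarrow> nat \<Rightarrow> real" where
  "cext m c j = (if 1 \<le> j \<and> j \<le> m then c j else 0)"

definition CS :: "nat \<Rightarrow> nat \<Rightarrow> (nat \<Rightarrow> real) \<Rightarrow> real" where
  "CS n m c = max ((\<Sum>j\<in>{1..m}. c j) / real n)
                  (max (cext m c 1) (cext m c n + cext m c (n + 1)))"

(* r_{n,m}(S): supremum over agents i and admissible disvaluations c
   (with CS_i > 0 so that the ratio is defined) of c(A_i(S)) / CS_i *)
definition ratio :: "nat \<Rightarrow> nat list \<Rightarrow> ereal" where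
  "ratio n S = (SUP p \<in> {(i, c). i \<in> {1..n} \<and> valid_disval (length S) c
                                 \<and> 0 < CS n (length S) c}.
       ereal ((\<Sum>j\<in>alloc S (fst p). snd p j) / CS n (length S) (snd p)))"

definition ridge :: "nat \<Rightarrow> nat \<Rightarrow> nat list \<Rightarrow> bool" where
  "ridge n m S \<longleftrightarrow> 2 * n \<le> m \<and> picking_order n m S
     \<and> (\<forall>r. 1 \<le> r \<and> r \<le> n \<longrightarrow> S ! (r - 1) = r)
     \<and> (\<forall>r. 1 \<le> r \<and> r \<le> n \<longrightarrow> S ! (n + r - 1) = n - r + 1)"

definition hat_r_nm :: "nat \<Rightarrow> nat \<Rightarrow> ereal" where
  "hat_r_nm n m = Min (ratio n ` {S. ridge n m S})"

definition hat_r :: "nat \<Rightarrow> ereal" where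
  "hat_r n = (SUP m \<in> {m. 2 * n \<le> m}. hat_r_nm n m)"

end

theory Submission
  imports Defs
begin

definition Qc :: "int \<Rightarrow> int \<Rightarrow> int \<Rightarrow> int \<Rightarrow> int \<Rightarrow> bool" where
  "Qc n g i y t \<longleftrightarrow> t = 0 \<or> (5*t*n + g*i \<le> g*y + 6*n \<and> 5*t*n \<le> g*y + n)"

fun goodp :: "int \<Rightarrow> int \<Rightarrow> int \<Rightarrow> int \<Rightarrow> int \<Rightarrow> (int\<times>int) list \<Rightarrow> bool" where
  "goodp n g i Ofs t [] = True"
| "goodp n g i Ofs t ((l,h)#ps) = ((l < i \<and> i \<le> h \<longrightarrow> Qc n g i (Ofs + h + 1) (t+1))
      \<and> goodp n g i (Ofs + (h - l)) (t + (if l < i \<and> i \<le> h then 1 else 0)) ps)"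

fun lenI :: "(int\<times>int) list \<Rightarrow> int" where
  "lenI [] = 0"
| "lenI ((l,h)#ps) = (h - l) + lenI ps"

fun cntI :: "int \<Rightarrow> (int\<times>int) list \<Rightarrow> int" where
  "cntI i [] = 0"
| "cntI i ((l,h)#ps) = (if l < i \<and> i \<le> h then 1 else 0) + cntI i ps"

definition perb :: "int \<Rightarrow> int \<Rightarrow> int \<Rightarrow> int \<Rightarrow> int \<Rightarrow> int \<Rightarrow> (int\<times>int) list" where
  "perb n b1 b2 b3 b4 b5 = [(b1,n),(b3,n),(0,b1),(b1,n),(b4,b5),(b2,n),
            (0,b1),(b1,n),(b4,b5),(0,n)]"

locale bs =
  fixes n b1 b2 b3 b4 b5 :: int
  assumes h1: "4*b1 \<le> n" "n \<le> 4*b1+3"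
  and h2: "5*b2 \<le> 2*n" "2*n \<le> 5*b2+4"
  and h3: "2*b3 \<le> n" "n \<le> 2*b3+1"
  and h4: "8*b4 \<le> 5*n" "5*n \<le> 8*b4+7"
  and h5: "4*b5 \<le> 3*n" "3*n \<le> 4*b5+3"
  and h6: "5 \<le> n"
  and hP: "b1 + b2 + b3 + 2*b4 \<le> n + 2*b5"
begin
lemma ord: "0 \<le> b1" "b1 \<le> b2" "b2 \<le> b3" "b3 \<le> b4" "b4 \<le> b5" "b5 \<le> n"
  using h1 h2 h3 h4 h5 h6 by linarith+

lemmas H = h1 h2 h3 h4 h5 h6 hP

lemma seg0: assumes "0 < i" "i \<le> b1"
  shows "goodp n 3 i 0 0 (perb n b1 b2 b3 b4 b5) \<and> 5 * cntI i (perb n b1 b2 b3 b4 b5) * n \<le> 3 * lenI (perb n b1 b2 b3 b4 b5)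
    \<and> 3 * (i - 1) \<le> 6 * n \<and> 3 * (n - i) \<le> 3 * n"
proof -
  have m: "0 < i" "\<not> i \<le> 0" "\<not> b1 < i" "i \<le> b1" "\<not> b2 < i" "i \<le> b2" "\<not> b3 < i" "i \<le> b3" "\<not> b4 < i" "i \<le> b4" "\<not> b5 < i" "i \<le> b5" "\<not> n < i" "i \<le> n"
    using assms ord by linarith+
  have 1: "goodp n 3 i 0 0 (perb n b1 b2 b3 b4 b5)"
    unfolding perb_def
    apply (simp only: goodp.simps m simp_thms if_True if_False)
    apply (insert assms H)
    by (simp add: Qc_def; (intro conjI; linarith)?)
  have 2: "5 * cntI i (perb n b1 b2 b3 b4 b5) * n \<le> 3 * lenI (perb n b1 b2 b3 b4 b5)"
    unfolding perb_def
    apply (simp only: cntI.simps lenI.simps m simp_thms if_True if_False)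
    using hP by simp
  have 3: "3 * (i - 1) \<le> 6 * n \<and> 3 * (n - i) \<le> 3 * n"
    apply (insert assms H) by (simp add: algebra_simps; (intro conjI)?; linarith)
  show ?thesis using 1 2 3 by blast
qed

lemma seg1: assumes "b1 < i" "i \<le> b2"
  shows "goodp n 4 i 0 0 (perb n b1 b2 b3 b4 b5) \<and> 5 * cntI i (perb n b1 b2 b3 b4 b5) * n \<le> 4 * lenI (perb n b1 b2 b3 b4 b5)
    \<and> 4 * (i - 1) \<le> 6 * n \<and> 4 * (n - i) \<le> 3 * n"
proof -
  have m: "0 < i" "\<not> i \<le> 0" "b1 < i" "\<not> i \<le> b1" "\<not> b2 < i" "i \<le> b2" "\<not> b3 < i" "i \<le> b3" "\<not> b4 < i" "i \<le> b4" "\<not> b5 < i" "i \<le> b5" "\<not> n < i" "i \<le> n"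
    using assms ord by linarith+
  have 1: "goodp n 4 i 0 0 (perb n b1 b2 b3 b4 b5)"
    unfolding perb_def
    apply (simp only: goodp.simps m simp_thms if_True if_False)
    apply (insert assms H)
    by (simp add: Qc_def; (intro conjI; linarith)?)
  have 2: "5 * cntI i (perb n b1 b2 b3 b4 b5) * n \<le> 4 * lenI (perb n b1 b2 b3 b4 b5)"
    unfolding perb_def
    apply (simp only: cntI.simps lenI.simps m simp_thms if_True if_False)
    using hP by simp
  have 3: "4 * (i - 1) \<le> 6 * n \<and> 4 * (n - i) \<le> 3 * n"
    apply (insert assms H) by (simp add: algebra_simps; (intro conjI)?; linarith)
  show ?thesis using 1 2 3 by blast
qed

lemma seg2: assumes "b2 < i" "i \<le> b3"
  shows "goodp n 5 i 0 0 (perb n b1 b2 b3 b4 b5) \<and> 5 * cntI i (perb n b1 b2 b3 b4 b5) * n \<le> 5 * lenI (perb n b1 b2 b3 b4 b5)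
    \<and> 5 * (i - 1) \<le> 6 * n \<and> 5 * (n - i) \<le> 3 * n"
proof -
  have m: "0 < i" "\<not> i \<le> 0" "b1 < i" "\<not> i \<le> b1" "b2 < i" "\<not> i \<le> b2" "\<not> b3 < i" "i \<le> b3" "\<not> b4 < i" "i \<le> b4" "\<not> b5 < i" "i \<le> b5" "\<not> n < i" "i \<le> n"
    using assms ord by linarith+
  have 1: "goodp n 5 i 0 0 (perb n b1 b2 b3 b4 b5)"
    unfolding perb_def
    apply (simp only: goodp.simps m simp_thms if_True if_False)
    apply (insert assms H)
    by (simp add: Qc_def; (intro conjI; linarith)?)
  have 2: "5 * cntI i (perb n b1 b2 b3 b4 b5) * n \<le> 5 * lenI (perb n b1 b2 b3 b4 b5)"
    unfolding perb_def
    apply (simp only: cntI.simps lenI.simps m simp_thms if_True if_False)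
    using hP by simp
  have 3: "5 * (i - 1) \<le> 6 * n \<and> 5 * (n - i) \<le> 3 * n"
    apply (insert assms H) by (simp add: algebra_simps; (intro conjI)?; linarith)
  show ?thesis using 1 2 3 by blast
qed

lemma seg3: assumes "b3 < i" "i \<le> b4"
  shows "goodp n 6 i 0 0 (perb n b1 b2 b3 b4 b5) \<and> 5 * cntI i (perb n b1 b2 b3 b4 b5) * n \<le> 6 * lenI (perb n b1 b2 b3 b4 b5)
    \<and> 6 * (i - 1) \<le> 6 * n \<and> 6 * (n - i) \<le> 3 * n"
proof -
  have m: "0 < i" "\<not> i \<le> 0" "b1 < i" "\<not> i \<le> b1" "b2 < i" "\<not> i \<le> b2" "b3 < i" "\<not> i \<le> b3" "\<not> b4 < i" "i \<le> b4" "\<not> b5 < i" "i \<le> b5" "\<not> n < i" "i \<le> n"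
    using assms ord by linarith+
  have 1: "goodp n 6 i 0 0 (perb n b1 b2 b3 b4 b5)"
    unfolding perb_def
    apply (simp only: goodp.simps m simp_thms if_True if_False)
    apply (insert assms H)
    by (simp add: Qc_def; (intro conjI; linarith)?)
  have 2: "5 * cntI i (perb n b1 b2 b3 b4 b5) * n \<le> 6 * lenI (perb n b1 b2 b3 b4 b5)"
    unfolding perb_def
    apply (simp only: cntI.simps lenI.simps m simp_thms if_True if_False)
    using hP by simp
  have 3: "6 * (i - 1) \<le> 6 * n \<and> 6 * (n - i) \<le> 3 * n"
    apply (insert assms H) by (simp add: algebra_simps; (intro conjI)?; linarith)
  show ?thesis using 1 2 3 by blast
qed

lemma seg4: assumes "b4 < i" "i \<le> b5"
  shows "goodp n 8 i 0 0 (perb n b1 b2 b3 b4 b5) \<and> 5 * cntI i (perb n b1 b2 b3 b4 b5) * n \<le> 8 * lenI (perb n b1 b2 b3 b4 b5)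
    \<and> 8 * (i - 1) \<le> 6 * n \<and> 8 * (n - i) \<le> 3 * n"
proof -
  have m: "0 < i" "\<not> i \<le> 0" "b1 < i" "\<not> i \<le> b1" "b2 < i" "\<not> i \<le> b2" "b3 < i" "\<not> i \<le> b3" "b4 < i" "\<not> i \<le> b4" "\<not> b5 < i" "i \<le> b5" "\<not> n < i" "i \<le> n"
    using assms ord by linarith+
  have 1: "goodp n 8 i 0 0 (perb n b1 b2 b3 b4 b5)"
    unfolding perb_def
    apply (simp only: goodp.simps m simp_thms if_True if_False)
    apply (insert assms H)
    by (simp add: Qc_def; (intro conjI; linarith)?)
  have 2: "5 * cntI i (perb n b1 b2 b3 b4 b5) * n \<le> 8 * lenI (perb n b1 b2 b3 b4 b5)"
    unfolding perb_def
    apply (simp only: cntI.simps lenI.simps m simp_thms if_True if_False)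
    using hP by simp
  have 3: "8 * (i - 1) \<le> 6 * n \<and> 8 * (n - i) \<le> 3 * n"
    apply (insert assms H) by (simp add: algebra_simps; (intro conjI)?; linarith)
  show ?thesis using 1 2 3 by blast
qed

lemma seg5: assumes "b5 < i" "i \<le> n"
  shows "goodp n 6 i 0 0 (perb n b1 b2 b3 b4 b5) \<and> 5 * cntI i (perb n b1 b2 b3 b4 b5) * n \<le> 6 * lenI (perb n b1 b2 b3 b4 b5)
    \<and> 6 * (i - 1) \<le> 6 * n \<and> 6 * (n - i) \<le> 3 * n"
proof -
  have m: "0 < i" "\<not> i \<le> 0" "b1 < i" "\<not> i \<le> b1" "b2 < i" "\<not> i \<le> b2" "b3 < i" "\<not> i \<le> b3" "b4 < i" "\<not> i \<le> b4" "b5 < i" "\<not> i \<le> b5" "\<not> n < i" "i \<le> n"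
    using assms ord by linarith+
  have 1: "goodp n 6 i 0 0 (perb n b1 b2 b3 b4 b5)"
    unfolding perb_def
    apply (simp only: goodp.simps m simp_thms if_True if_False)
    apply (insert assms H)
    by (simp add: Qc_def; (intro conjI; linarith)?)
  have 2: "5 * cntI i (perb n b1 b2 b3 b4 b5) * n \<le> 6 * lenI (perb n b1 b2 b3 b4 b5)"
    unfolding perb_def
    apply (simp only: cntI.simps lenI.simps m simp_thms if_True if_False)
    using hP by simp
  have 3: "6 * (i - 1) \<le> 6 * n \<and> 6 * (n - i) \<le> 3 * n"
    apply (insert assms H) by (simp add: algebra_simps; (intro conjI)?; linarith)
  show ?thesis using 1 2 3 by blast
qed

end

definition gcls :: "nat \<Rightarrow> nat \<Rightarrow> nat" where
  "gcls n i = (if i \<le> n div 4 then 3 else if i \<le> 2*n div 5 then 4 else if i \<le> n div 2 then 5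
     else if i \<le> 5*n div 8 then 6 else if i \<le> 3*n div 4 then 8 else 6)"

definition perN :: "nat \<Rightarrow> (nat\<times>nat) list" where
  "perN n = [(n div 4,n),(n div 2,n),(0,n div 4),(n div 4,n),(5*n div 8,3*n div 4),(2*n div 5,n),
            (0,n div 4),(n div 4,n),(5*n div 8,3*n div 4),(0,n)]"

definition perI :: "nat \<Rightarrow> (int\<times>int) list" where
  "perI n = map (\<lambda>(l,h). (int l, int h)) (perN n)"

definition agent_prop :: "nat \<Rightarrow> nat \<Rightarrow> bool" where
  "agent_prop n i \<longleftrightarrow> goodp (int n) (int (gcls n i)) (int i) 0 0 (perI n)
     \<and> 5 * cntI (int i) (perI n) * int n \<le> int (gcls n i) * lenI (perI n)
     \<and> int (gcls n i) * (int i - 1) \<le> 6 * int n \<and> int (gcls n i) * (int n - int i) \<le> 3 * int n"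

lemma hP_nat: "n div 4 + 2*n div 5 + n div 2 + 2*(5*n div 8) \<le> n + 2*(3*(n::nat) div 4)"
proof (cases "n < 15")
  case True
  then have "n \<in> {0..<15}" by simp
  also have "{0..<15} = set [0..<15]" by simp
  finally have "n \<in> set [0..<15]" .
  then show ?thesis by (simp add: upt_rec) (elim disjE; simp)
next
  case False
  have "4*(n div 4) \<le> n" "5*(2*n div 5) \<le> 2*n" "2*(n div 2) \<le> n" "8*(5*n div 8) \<le> 5*n" "3*n \<le> 4*(3*n div 4)+3"
    by linarith+
  then show ?thesis using False by linarith
qed

lemma agent_big:
  assumes "5 \<le> n" "1 \<le> i" "i \<le> n"
  shows "agent_prop n i"
proof -
  have d: "4*(n div 4) \<le> n" "n \<le> 4*(n div 4)+3" "5*(2*n div 5) \<le> 2*n" "2*n \<le> 5*(2*n div 5)+4"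
    "2*(n div 2) \<le> n" "n \<le> 2*(n div 2)+1" "8*(5*n div 8) \<le> 5*n" "5*n \<le> 8*(5*n div 8)+7"
    "4*(3*n div 4) \<le> 3*n" "3*n \<le> 4*(3*n div 4)+3"
    "n div 4 + 2*n div 5 + n div 2 + 2*(5*n div 8) \<le> n + 2*(3*n div 4)"
    using hP_nat[of n] by linarith+
  interpret B: bs "int n" "int (n div 4)" "int (2*n div 5)" "int (n div 2)" "int (5*n div 8)" "int (3*n div 4)"
    apply unfold_locales using d assms by linarith+
  have pe: "perI n = perb (int n) (int (n div 4)) (int (2*n div 5)) (int (n div 2)) (int (5*n div 8)) (int (3*n div 4))"
    by (simp add: perI_def perN_def perb_def)
  have ii: "0 < int i" "int i \<le> int n" using assms by auto
  show ?thesis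
    unfolding agent_prop_def pe gcls_def
    using B.seg0[of "int i"] B.seg1[of "int i"] B.seg2[of "int i"] B.seg3[of "int i"] B.seg4[of "int i"] B.seg5[of "int i"] ii
    by (auto split: if_splits)
qed

lemma agent_small:
  assumes "1 \<le> n" "n \<le> 4" "1 \<le> i" "i \<le> n"
  shows "agent_prop n i"
proof -
  have "(n = 1 \<and> i = 1) \<or> (n = 2 \<and> (i = 1 \<or> i = 2)) \<or> (n = 3 \<and> (i = 1 \<or> i = 2 \<or> i = 3))
     \<or> (n = 4 \<and> (i = 1 \<or> i = 2 \<or> i = 3 \<or> i = 4))" using assms by auto
  then show ?thesis
    by (elim disjE conjE; simp add: agent_prop_def perI_def perN_def gcls_def Qc_def)
qed

lemma agent_ok: assumes "1 \<le> n" "1 \<le> i" "i \<le> n" shows "agent_prop n i"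
  using agent_big agent_small assms by (cases "5 \<le> n") auto



definition pass :: "nat \<Rightarrow> nat \<Rightarrow> nat list" where
  "pass l h = rev [Suc l..<Suc h]"

definition tlist :: "(nat\<times>nat) list \<Rightarrow> nat list" where
  "tlist ps = concat (map (\<lambda>(l,h). pass l h) ps)"

definition toI :: "(nat\<times>nat) list \<Rightarrow> (int\<times>int) list" where
  "toI ps = map (\<lambda>(l,h). (int l, int h)) ps"

lemma count_take_pass:
  "count_list (take q (pass l h)) i = (if l < i \<and> i \<le> h \<and> h - i < q then 1 else 0)"
proof (induction h arbitrary: q)
  case 0
  then show ?case by (simp add: pass_def)
next
  case (Suc h)
  show ?case
  proof (cases "l \<le> h")
    case True
    then have e: "pass l (Suc h) = Suc h # pass l h" by (simp add: pass_def)
    show ?thesis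
    proof (cases q)
      case 0
      then show ?thesis by (simp add: e)
    next
      case (Suc q')
      show ?thesis using Suc.IH[of q'] True unfolding e Suc by auto
    qed
  next
    case False
    then have "pass l (Suc h) = []" by (simp add: pass_def)
    then show ?thesis using False by auto
  qed
qed

lemma length_pass[simp]: "length (pass l h) = h - l"
  by (simp add: pass_def; arith)

lemma count_pass: "count_list (pass l h) i = (if l < i \<and> i \<le> h then 1 else 0)"
proof -
  have "take (Suc h) (pass l h) = pass l h" by simp
  then show ?thesis using count_take_pass[of "Suc h" l h i] by (auto split: if_splits)
qed

lemma set_pass: "set (pass l h) = {Suc l..h}"
  by (auto simp: pass_def)

lemma Qc_mono: "Qc n g i y t \<Longrightarrow> y \<le> y' \<Longrightarrow> 0 \<le> g \<Longrightarrow> Qc n g i y' t"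
  unfolding Qc_def using mult_left_mono[of y y' g] by auto

lemma main_count:
  assumes "goodp n g (int i) Ofs t (toI ps)" "\<forall>(l,h)\<in>set ps. l \<le> h"
    "Qc n g (int i) (Ofs + int i) t" "0 \<le> g"
  shows "Qc n g (int i) (Ofs + int q + int i) (t + int (count_list (take q (tlist ps)) i))"
  using assms
proof (induction ps arbitrary: Ofs t q)
  case Nil
  then show ?case using Qc_mono[of n g "int i" "Ofs + int i" t] by (simp add: tlist_def)
next
  case (Cons p ps)
  obtain l h where p: "p = (l,h)" by (cases p)
  have lh: "l \<le> h" using Cons.prems(2) p by auto
  have tl: "tlist (p # ps) = pass l h @ tlist ps" by (simp add: tlist_def p)
  have g1: "l < i \<and> i \<le> h \<longrightarrow> Qc n g (int i) (Ofs + int h + 1) (t+1)"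
    and g2: "goodp n g (int i) (Ofs + (int h - int l)) (t + (if l < i \<and> i \<le> h then 1 else 0)) (toI ps)"
    using Cons.prems(1) by (simp_all add: p toI_def)
  show ?case
  proof (cases "q \<le> h - l")
    case True
    then have c: "count_list (take q (tlist (p#ps))) i = (if l < i \<and> i \<le> h \<and> h - i < q then 1 else 0)"
      unfolding tl by (simp add: count_take_pass)
    show ?thesis
    proof (cases "l < i \<and> i \<le> h \<and> h - i < q")
      case True
      then have "Ofs + int h + 1 \<le> Ofs + int q + int i" by linarith
      then show ?thesis using g1 True c Qc_mono Cons.prems(4) by auto
    next
      case False
      then show ?thesis using c Cons.prems(3,4) Qc_mono[of n g "int i" "Ofs + int i" t "Ofs + int q + int i"] by auto
    qed
  next
    case False
    define q' where "q' = q - (h - l)"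
    have oo: "q = (h - l) + q'" using False q'_def by auto
    have c: "count_list (take q (tlist (p#ps))) i = (if l < i \<and> i \<le> h then 1 else 0) + count_list (take q' (tlist ps)) i"
      unfolding tl oo by (simp add: count_pass)
    have q: "Qc n g (int i) (Ofs + (int h - int l) + int i) (t + (if l < i \<and> i \<le> h then 1 else 0))"
    proof (cases "l < i \<and> i \<le> h")
      case True
      then have "Ofs + int h + 1 \<le> Ofs + (int h - int l) + int i" by linarith
      then show ?thesis using g1 True Qc_mono Cons.prems(4) by auto
    next
      case False
      have "Ofs + int i \<le> Ofs + (int h - int l) + int i" using lh by simp
      then show ?thesis using False Cons.prems(3,4) Qc_mono[of n g "int i" "Ofs + int i" t] by auto
    qed
    have F: "Qc n g (int i) (Ofs + (int h - int l) + int q' + int i) (t + (if l < i \<and> i \<le> h then 1 else 0) + int (count_list (take q' (tlist ps)) i))"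
      using Cons.IH[OF g2 _ q Cons.prems(4)] Cons.prems(2) by auto
    have e1: "Ofs + (int h - int l) + int q' + int i = Ofs + int q + int i" using oo lh by simp
    have e2: "t + (if l < i \<and> i \<le> h then 1 else 0) + int (count_list (take q' (tlist ps)) i) = t + int (count_list (take q (tlist (p # ps))) i)"
      unfolding c by simp
    show ?thesis using F unfolding e1 e2 .
  qed
qed

lemma Qc_shift: "Qc n g i y t \<Longrightarrow> 1 \<le> t \<Longrightarrow> 5*c*n \<le> g*P \<Longrightarrow> Qc n g i (y + P) (t + c)"
  unfolding Qc_def by (auto simp: algebra_simps)

lemma goodp_shift: "goodp n g i Ofs t ps \<Longrightarrow> 0 \<le> t \<Longrightarrow> 0 \<le> c \<Longrightarrow> 5*c*n \<le> g*P \<Longrightarrow> goodp n g i (Ofs + P) (t + c) ps"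
proof (induction ps arbitrary: Ofs t)
  case Nil
  then show ?case by simp
next
  case (Cons p ps)
  obtain l h where p: "p = (l,h)" by (cases p)
  have a: "Qc n g i (Ofs + h + 1 + P) (t + 1 + c)" if "l < i \<and> i \<le> h"
    using Qc_shift[of n g i "Ofs + h + 1" "t+1" c P] Cons.prems that p by auto
  have b: "goodp n g i (Ofs + (h - l) + P) (t + (if l < i \<and> i \<le> h then 1 else 0) + c) ps"
    using Cons.IH[of "Ofs + (h - l)" "t + (if l < i \<and> i \<le> h then 1 else 0)"] Cons.prems p by auto
  show ?case using a b p by (simp add: algebra_simps)
qed

lemma goodp_append: "goodp n g i Ofs t (xs @ ys) \<longleftrightarrow> goodp n g i Ofs t xs \<and> goodp n g i (Ofs + lenI xs) (t + cntI i xs) ys"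
proof (induction xs arbitrary: Ofs t)
  case Nil
  then show ?case by simp
next
  case (Cons p xs)
  obtain l h where p: "p = (l,h)" by (cases p)
  show ?case using Cons.IH p by (simp add: algebra_simps)
qed

lemma cntI_nonneg: "0 \<le> cntI i ps"
proof (induction ps)
  case Nil
  then show ?case by simp
next
  case (Cons p ps)
  then show ?case by (cases p) auto
qed

lemma goodp_iter: "goodp n g i 0 0 per \<Longrightarrow> 5*cntI i per*n \<le> g*lenI per \<Longrightarrow> goodp n g i (int k * lenI per) (int k * cntI i per) per"
proof (induction k)
  case 0
  then show ?case by simp
next
  case (Suc k)
  have "goodp n g i (int k * lenI per + lenI per) (int k * cntI i per + cntI i per) per"
    using goodp_shift[OF Suc.IH[OF Suc.prems]] cntI_nonneg Suc.prems(2) by (simp add: mult_nonneg_nonneg)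
  then show ?case by (simp add: algebra_simps)
qed

lemma goodp_rep: assumes "goodp n g i 0 0 per" "5*cntI i per*n \<le> g*lenI per"
  shows "goodp n g i (int k * lenI per) (int k * cntI i per) (concat (replicate R per))"
proof (induction R arbitrary: k)
  case 0
  then show ?case by simp
next
  case (Suc R)
  have "goodp n g i (int (Suc k) * lenI per) (int (Suc k) * cntI i per) (concat (replicate R per))"
    using Suc.IH by blast
  then show ?case using goodp_iter[OF assms, of k] by (simp add: goodp_append algebra_simps)
qed


section \<open>Abel summation\<close>

lemma abel:
  fixes c \<mu> :: "nat \<Rightarrow> real"
  assumes AS: "A \<subseteq> {1..m}"
    and nonneg: "\<And>j. 1 \<le> j \<Longrightarrow> j \<le> m \<Longrightarrow> 0 \<le> c j"
    and mono: "\<And>j. 1 \<le> j \<Longrightarrow> j < m \<Longrightarrow> c (Suc j) \<le> c j"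
    and dom: "\<And>k. k \<le> m \<Longrightarrow> real (card (A \<inter> {1..k})) \<le> (\<Sum>j\<in>{1..k}. \<mu> j)"
  shows "(\<Sum>j\<in>A. c j) \<le> (\<Sum>j\<in>{1..m}. \<mu> j * c j)"
proof -
  have inv: "(\<Sum>j\<in>A \<inter> {1..k}. c j) + ((\<Sum>j\<in>{1..k}. \<mu> j) - real (card (A \<inter> {1..k}))) * c k
      \<le> (\<Sum>j\<in>{1..k}. \<mu> j * c j)" if "k \<le> m" for k
    using that
  proof (induction k)
    case 0
    then show ?case by simp
  next
    case (Suc k)
    define F where "F = real (card (A \<inter> {1..k}))"
    define M where "M = (\<Sum>j\<in>{1..k}. \<mu> j)"
    define f where "f = (if Suc k \<in> A then 1 else 0::real)"
    have IH: "(\<Sum>j\<in>A \<inter> {1..k}. c j) + (M - F) * c k \<le> (\<Sum>j\<in>{1..k}. \<mu> j * c j)"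
      using Suc by (simp add: M_def F_def)
    have s1: "A \<inter> {1..Suc k} = (A \<inter> {1..k}) \<union> (if Suc k \<in> A then {Suc k} else {})"
      by (auto simp: le_Suc_eq)
    have sumA: "(\<Sum>j\<in>A \<inter> {1..Suc k}. c j) = (\<Sum>j\<in>A \<inter> {1..k}. c j) + f * c (Suc k)"
      unfolding s1 f_def by (auto simp: sum.insert)
    have cardA: "real (card (A \<inter> {1..Suc k})) = F + f"
      unfolding s1 f_def F_def by (auto simp: card_insert_if)
    have sumM: "(\<Sum>j\<in>{1..Suc k}. \<mu> j) = M + \<mu> (Suc k)" by (simp add: M_def)
    have sumR: "(\<Sum>j\<in>{1..Suc k}. \<mu> j * c j) = (\<Sum>j\<in>{1..k}. \<mu> j * c j) + \<mu> (Suc k) * c (Suc k)" by simp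
    have D: "0 \<le> M - F" using dom[of k] Suc.prems by (simp add: M_def F_def)
    have key: "(M - F) * (c (Suc k) - c k) \<le> 0"
    proof (cases "k = 0")
      case True
      then show ?thesis by (simp add: M_def F_def)
    next
      case False
      then have "c (Suc k) \<le> c k" using mono[of k] Suc.prems by auto
      then show ?thesis using D by (simp add: mult_nonneg_nonpos)
    qed
    show ?case unfolding sumA cardA sumM sumR using IH key by (simp add: algebra_simps)
  qed
  have "A \<inter> {1..m} = A" using AS by auto
  then have e: "(\<Sum>j\<in>A. c j) + ((\<Sum>j\<in>{1..m}. \<mu> j) - real (card A)) * c m \<le> (\<Sum>j\<in>{1..m}. \<mu> j * c j)"
    using inv[of m] by simp
  have "0 \<le> ((\<Sum>j\<in>{1..m}. \<mu> j) - real (card A)) * c m"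
  proof (cases "m = 0")
    case True
    then have "A = {}" using AS by auto
    then show ?thesis using True by simp
  next
    case False
    have "real (card A) \<le> (\<Sum>j\<in>{1..m}. \<mu> j)" using dom[of m] \<open>A \<inter> {1..m} = A\<close> by simp
    moreover have "0 \<le> c m" using nonneg[of m] False by simp
    ultimately show ?thesis by simp
  qed
  then show ?thesis using e by linarith
qed


lemma agent_bound:
  fixes c :: "nat \<Rightarrow> real" and \<alpha> \<beta> \<gamma> :: real
  assumes v: "valid_disval m c" and n1: "1 \<le> n" and nm: "n + 1 \<le> m" and AS: "A \<subseteq> {1..m}"
    and a0: "0 \<le> \<alpha>" and b0: "0 \<le> \<beta>" and g0: "0 \<le> \<gamma>" and tot: "real n * \<alpha> + \<beta> + \<gamma> \<le> 8/5"
    and dom: "\<And>k. k \<le> m \<Longrightarrow> real (card (A \<inter> {1..k})) \<le> \<alpha> * real k + (if 1 \<le> k then \<beta> else 0)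
               + (if n \<le> k then \<gamma> else 0) + (if n + 1 \<le> k then \<gamma> else 0)"
  shows "(\<Sum>j\<in>A. c j) \<le> 8/5 * CS n m c"
proof -
  define \<mu> where "\<mu> j = \<alpha> + (if j = 1 then \<beta> else 0) + (if j = n then \<gamma> else 0) + (if j = n+1 then \<gamma> else 0)" for j
  have nonneg: "\<And>j. 1 \<le> j \<Longrightarrow> j \<le> m \<Longrightarrow> 0 \<le> c j" using v unfolding valid_disval_def by auto
  have mono: "\<And>j. 1 \<le> j \<Longrightarrow> j < m \<Longrightarrow> c (Suc j) \<le> c j" using v unfolding valid_disval_def by auto
  have pre: "(\<Sum>j\<in>{1..k}. \<mu> j) = \<alpha> * real k + (if 1 \<le> k then \<beta> else 0)
               + (if n \<le> k then \<gamma> else 0) + (if n + 1 \<le> k then \<gamma> else 0)" for k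
    unfolding \<mu>_def using n1 by (simp add: sum.distrib)
  have "(\<Sum>j\<in>A. c j) \<le> (\<Sum>j\<in>{1..m}. \<mu> j * c j)"
    by (rule abel[of A m c \<mu>, OF AS nonneg mono]) (use dom pre in auto)
  also have "(\<Sum>j\<in>{1..m}. \<mu> j * c j) = \<alpha> * (\<Sum>j\<in>{1..m}. c j) + \<beta> * c 1 + \<gamma> * c n + \<gamma> * c (n+1)"
  proof -
    have pw: "\<mu> j * c j = \<alpha> * c j + (if j = 1 then \<beta> * c 1 else 0) + (if j = n then \<gamma> * c n else 0)
       + (if j = n+1 then \<gamma> * c (n+1) else 0)" for j
      unfolding \<mu>_def by (simp add: ring_distribs)
    show ?thesis unfolding pw using n1 nm by (simp add: sum.distrib sum_distrib_left)
  qed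
  also have "\<dots> \<le> 8/5 * CS n m c"
  proof -
    let ?S = "\<Sum>j\<in>{1..m}. c j"
    have ce: "cext m c 1 = c 1" "cext m c n = c n" "cext m c (n+1) = c (n+1)"
      using n1 nm by (auto simp: cext_def)
    have c1: "?S / real n \<le> CS n m c" "c 1 \<le> CS n m c" "c n + c (n+1) \<le> CS n m c"
      unfolding CS_def ce by auto
    have "\<alpha> * ?S = (real n * \<alpha>) * (?S / real n)" using n1 by (simp add: field_simps)
    also have "\<dots> \<le> (real n * \<alpha>) * CS n m c" using mult_left_mono[OF c1(1), of "real n * \<alpha>"] a0 by simp
    finally have t1: "\<alpha> * ?S \<le> (real n * \<alpha>) * CS n m c" .
    have t2: "\<beta> * c 1 \<le> \<beta> * CS n m c" using c1(2) b0 by (simp add: mult_left_mono)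
    have t3: "\<gamma> * c n + \<gamma> * c (n+1) \<le> \<gamma> * CS n m c" using c1(3) g0 mult_left_mono[OF c1(3) g0] by (simp add: ring_distribs)
    have cs0: "0 \<le> CS n m c" using c1(2) nonneg[of 1] nm by linarith
    have "(real n * \<alpha> + \<beta> + \<gamma>) * CS n m c \<le> 8/5 * CS n m c" using mult_right_mono[OF tot cs0] by simp
    then show ?thesis using t1 t2 t3 by (simp add: ring_distribs)
  qed
  finally show ?thesis .
qed


lemma cert_ok:
  fixes n i g k a :: nat and \<alpha> \<beta> \<gamma> :: real
  assumes i1: "1 \<le> i" and inn: "i \<le> n" and g8: "g \<le> 8"
    and v1: "int g * (int i - 1) \<le> 6 * int n" and v2: "int g * (int n - int i) \<le> 3 * int n"
    and cnt: "(k < i \<and> a = 0) \<or> (i \<le> k \<and> k + i \<le> 2*n \<and> a = 1) \<or> (2*n < k + i \<and> k \<le> 2*n \<and> a = 2)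
       \<or> (2*n < k \<and> 2 \<le> a \<and> Qc (int n) (int g) (int i) (int (k - 2*n) + int i) (int a - 2))"
    and al: "\<alpha> = real g / (5 * real n)" and be: "\<beta> = max 0 (1 - \<alpha> * real i)" and ga: "\<gamma> = 8/5 - \<alpha> * real n - \<beta>"
  shows "real a \<le> \<alpha> * real k + (if 1 \<le> k then \<beta> else 0) + (if n \<le> k then \<gamma> else 0) + (if n + 1 \<le> k then \<gamma> else 0)"
proof -
  have N: "0 < real n" using i1 inn by simp
  have a0: "0 \<le> \<alpha>" using al by simp
  have an: "\<alpha> * real n = real g / 5" unfolding al using N by (simp add: field_simps)
  have rv1: "real g * (real i - 1) \<le> 6 * real n" 
  proof -
    have "real_of_int (int g * (int i - 1)) \<le> real_of_int (6 * int n)" using v1 by (simp only: of_int_le_iff)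
    then show ?thesis by simp
  qed
  have rv2: "real g * (real n - real i) \<le> 3 * real n"
  proof -
    have "real_of_int (int g * (int n - int i)) \<le> real_of_int (3 * int n)" using v2 by (simp only: of_int_le_iff)
    then show ?thesis by simp
  qed
  have f1: "\<alpha> * real i - \<alpha> \<le> 6/5"
  proof -
    have "\<alpha> * real i - \<alpha> = real g * (real i - 1) / (5 * real n)" unfolding al using N by (simp add: field_simps)
    also have "\<dots> \<le> 6 * real n / (5 * real n)" using rv1 N by (intro divide_right_mono) auto
    also have "\<dots> = 6/5" using N by simp
    finally show ?thesis .
  qed
  have f2: "\<alpha> * real n - \<alpha> * real i \<le> 3/5"
  proof -
    have "\<alpha> * real n - \<alpha> * real i = real g * (real n - real i) / (5 * real n)" unfolding al using N by (simp add: field_simps)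
    also have "\<dots> \<le> 3 * real n / (5 * real n)" using rv2 N by (intro divide_right_mono) auto
    also have "\<dots> = 3/5" using N by simp
    finally show ?thesis .
  qed
  have f3: "\<alpha> * real n \<le> 8/5" using an g8 by simp
  have b0: "0 \<le> \<beta>" and b1: "1 - \<alpha> * real i \<le> \<beta>" and b2: "\<beta> = 0 \<or> \<beta> = 1 - \<alpha> * real i"
    using be by auto
  have ai0: "0 \<le> \<alpha> * real i" using a0 by simp
  have g0: "0 \<le> \<gamma>" using b2 f2 f3 ga by auto
  have mono: "\<alpha> * real x \<le> \<alpha> * real y" if "x \<le> y" for x y using a0 that by (simp add: mult_left_mono)
  consider (A) "k < i" "a = 0" | (B) "i \<le> k" "k + i \<le> 2*n" "a = 1" | (C) "2*n < k + i" "k \<le> 2*n" "a = 2"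
    | (D) "2*n < k" "2 \<le> a" "Qc (int n) (int g) (int i) (int (k - 2*n) + int i) (int a - 2)"
    using cnt by blast
  then show ?thesis
  proof cases
    case A
    have "0 \<le> \<alpha> * real k" using a0 by simp
    then show ?thesis using A b0 g0 by auto
  next
    case B
    have "\<alpha> * real i \<le> \<alpha> * real k" using mono B by simp
    then show ?thesis using B b1 b0 g0 i1 by auto
  next
    case C
    have k1: "n + 1 \<le> k" using C inn by linarith
    have "\<alpha> * real (2*n + 1 - i) \<le> \<alpha> * real k" using mono C by simp
    moreover have "\<alpha> * real (2*n + 1 - i) = 2 * (\<alpha> * real n) + \<alpha> - \<alpha> * real i"
      using inn by (simp add: of_nat_diff algebra_simps)
    ultimately have "2 * (\<alpha> * real n) + \<alpha> - \<alpha> * real i \<le> \<alpha> * real k" by simp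
    then show ?thesis using C k1 b2 f1 ga a0 i1 by auto
  next
    case D
    define q where "q = k - 2*n"
    have kq: "k = 2*n + q" using D q_def by simp
    have ak: "\<alpha> * real k = 2 * (\<alpha> * real n) + \<alpha> * real q" unfolding kq by (simp add: algebra_simps)
    define t where "t = a - 2"
    have at: "a = t + 2" using D t_def by simp
    have Q: "t = 0 \<or> (5 * int t * int n + int g * int i \<le> int g * (int q + int i) + 6 * int n
        \<and> 5 * int t * int n \<le> int g * (int q + int i) + int n)"
      using D(3) unfolding Qc_def q_def t_def using D(2) by (simp add: of_nat_diff)
    have k1: "n + 1 \<le> k" "1 \<le> k" "n \<le> k" using D by auto
    have rhs: "\<alpha> * real k + (if 1 \<le> k then \<beta> else 0) + (if n \<le> k then \<gamma> else 0) + (if n + 1 \<le> k then \<gamma> else 0)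
        = \<alpha> * real q + 16/5 - \<beta>" using k1 ak ga by simp
    have "real t \<le> \<alpha> * real q + 16/5 - \<beta> - 2"
    proof (cases "t = 0")
      case True
      have "\<beta> \<le> 1" using be ai0 by auto
      moreover have "0 \<le> \<alpha> * real q" using a0 by simp
      ultimately show ?thesis using True by simp
    next
      case False
      then have q1: "5 * int t * int n \<le> int g * int q + 6 * int n"
        and q2: "5 * int t * int n \<le> int g * (int q + int i) + int n" using Q by (auto simp: algebra_simps)
      have r1: "5 * real t * real n \<le> real g * real q + 6 * real n"
      proof -
        have "real_of_int (5 * int t * int n) \<le> real_of_int (int g * int q + 6 * int n)" using q1 by (simp only: of_int_le_iff)
        then show ?thesis by simp
      qed
      have r2: "5 * real t * real n \<le> real g * (real q + real i) + real n"
      proof -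
        have "real_of_int (5 * int t * int n) \<le> real_of_int (int g * (int q + int i) + int n)" using q2 by (simp only: of_int_le_iff)
        then show ?thesis by simp
      qed
      have s1: "real t \<le> \<alpha> * real q + 6/5"
      proof -
        have "real t = 5 * real t * real n / (5 * real n)" using N by simp
        also have "\<dots> \<le> (real g * real q + 6 * real n) / (5 * real n)" using r1 N by (intro divide_right_mono) auto
        also have "\<dots> = \<alpha> * real q + 6/5" unfolding al using N by (simp add: field_simps)
        finally show ?thesis .
      qed
      have s2: "real t \<le> \<alpha> * real q + \<alpha> * real i + 1/5"
      proof -
        have "real t = 5 * real t * real n / (5 * real n)" using N by simp
        also have "\<dots> \<le> (real g * (real q + real i) + real n) / (5 * real n)" using r2 N by (intro divide_right_mono) auto
        also have "\<dots> = \<alpha> * real q + \<alpha> * real i + 1/5" unfolding al using N by (simp add: field_simps)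
        finally show ?thesis .
      qed
      show ?thesis using b2 s1 s2 by auto
    qed
    then show ?thesis unfolding rhs at by simp
  qed
qed

lemma cert_params:
  fixes n i g :: nat and \<alpha> \<beta> \<gamma> :: real
  assumes i1: "1 \<le> i" and inn: "i \<le> n" and g8: "g \<le> 8"
    and v2: "int g * (int n - int i) \<le> 3 * int n"
    and al: "\<alpha> = real g / (5 * real n)" and be: "\<beta> = max 0 (1 - \<alpha> * real i)" and ga: "\<gamma> = 8/5 - \<alpha> * real n - \<beta>"
  shows "0 \<le> \<alpha>" "0 \<le> \<beta>" "0 \<le> \<gamma>" "real n * \<alpha> + \<beta> + \<gamma> \<le> 8/5"
proof -
  have N: "0 < real n" using i1 inn by simp
  have a0: "0 \<le> \<alpha>" using al by simp
  have an: "\<alpha> * real n = real g / 5" unfolding al using N by (simp add: field_simps)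
  have rv2: "real g * (real n - real i) \<le> 3 * real n"
  proof -
    have "real_of_int (int g * (int n - int i)) \<le> real_of_int (3 * int n)" using v2 by (simp only: of_int_le_iff)
    then show ?thesis by simp
  qed
  have f2: "\<alpha> * real n - \<alpha> * real i \<le> 3/5"
  proof -
    have "\<alpha> * real n - \<alpha> * real i = real g * (real n - real i) / (5 * real n)" unfolding al using N by (simp add: field_simps)
    also have "\<dots> \<le> 3 * real n / (5 * real n)" using rv2 N by (intro divide_right_mono) auto
    also have "\<dots> = 3/5" using N by simp
    finally show ?thesis .
  qed
  have f3: "\<alpha> * real n \<le> 8/5" using an g8 by simp
  show "0 \<le> \<alpha>" by (rule a0)
  show "0 \<le> \<beta>" using be by simp
  show "0 \<le> \<gamma>" using be f2 f3 ga by auto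
  show "real n * \<alpha> + \<beta> + \<gamma> \<le> 8/5" using ga by (simp add: algebra_simps)
qed

section \<open>The picking order\<close>

declare upt_Suc[simp del]

definition Tl :: "nat \<Rightarrow> nat \<Rightarrow> nat list" where
  "Tl n m = tlist (concat (replicate m (perN n)))"

definition Sq :: "nat \<Rightarrow> nat \<Rightarrow> nat list" where
  "Sq n m = [1..<Suc n] @ rev [1..<Suc n] @ take (m - 2*n) (Tl n m)"

lemma perN_bounds: "\<forall>(l,h)\<in>set (perN n). l \<le> h \<and> h \<le> n"
proof -
  have "5*n div 8 \<le> 3*n div 4" by linarith
  then show ?thesis by (auto simp: perN_def)
qed

lemma tlist_append: "tlist (xs @ ys) = tlist xs @ tlist ys"
  by (simp add: tlist_def)

lemma tlist_rep: "tlist (concat (replicate m ps)) = concat (replicate m (tlist ps))"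
  by (induction m) (simp_all add: tlist_def)

lemma length_tlist_perN: "n \<le> length (tlist (perN n))"
  by (simp add: tlist_def perN_def)

lemma length_Tl: "m * n \<le> length (Tl n m)"
proof -
  have "length (Tl n m) = m * length (tlist (perN n))"
    by (simp add: Tl_def tlist_rep length_concat sum_list_replicate)
  then show ?thesis using length_tlist_perN[of n] by simp
qed

lemma set_tlist: "\<forall>(l,h)\<in>set ps. h \<le> n \<Longrightarrow> set (tlist ps) \<subseteq> {1..n}"
  by (auto simp: tlist_def set_pass)

lemma set_Tl: "set (Tl n m) \<subseteq> {1..n}"
proof -
  have "\<forall>(l,h)\<in>set (concat (replicate m (perN n))). h \<le> n"
    using perN_bounds[of n] by auto
  then show ?thesis unfolding Tl_def by (rule set_tlist)
qed

lemma length_Sq: assumes "1 \<le> n" "2*n \<le> m" shows "length (Sq n m) = m"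
proof -
  have "m - 2*n \<le> length (Tl n m)" using length_Tl[of m n] assms
    by (metis diff_le_self le_trans mult.commute mult_le_mono2 nat_mult_1_right)
  then show ?thesis using assms by (simp add: Sq_def)
qed

lemma ridge_Sq: assumes "1 \<le> n" "2*n \<le> m" shows "ridge n m (Sq n m)"
proof -
  have len: "length (Sq n m) = m" using length_Sq[OF assms] .
  have st: "set (Sq n m) \<subseteq> {1..n}"
    using set_Tl[of n m] set_take_subset[of "m - 2*n" "Tl n m"] by (auto simp: Sq_def)
  have r1: "Sq n m ! (r - 1) = r" if "1 \<le> r" "r \<le> n" for r
    using that by (simp add: Sq_def nth_append; arith)
  have r2: "Sq n m ! (n + r - 1) = n - r + 1" if "1 \<le> r" "r \<le> n" for r
  proof -
    have "Sq n m ! (n + r - 1) = (rev [1..<Suc n] @ take (m - 2*n) (Tl n m)) ! (r - 1)"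
      using that by (simp add: Sq_def nth_append del: upt_Suc)
    also have "\<dots> = rev [1..<Suc n] ! (r - 1)" using that by (simp add: nth_append del: upt_Suc)
    also have "\<dots> = n - r + 1" using that by (simp add: rev_nth)
    finally show ?thesis .
  qed
  show ?thesis unfolding ridge_def picking_order_def using assms len st r1 r2 by auto
qed

lemma card_count:
  "k \<le> length xs \<Longrightarrow> card ({r. 1 \<le> r \<and> r \<le> length xs \<and> xs ! (r - 1) = i} \<inter> {1..k}) = count_list (take k xs) i"
proof (induction k)
  case 0
  then show ?case by simp
next
  case (Suc k)
  have e: "{r. 1 \<le> r \<and> r \<le> length xs \<and> xs ! (r - 1) = i} \<inter> {1..Suc k}
      = ({r. 1 \<le> r \<and> r \<le> length xs \<and> xs ! (r - 1) = i} \<inter> {1..k}) \<union> (if xs ! k = i then {Suc k} else {})"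
    using Suc.prems by (auto simp: le_Suc_eq)
  have t: "take (Suc k) xs = take k xs @ [xs ! k]" using Suc.prems by (simp add: take_Suc_conv_app_nth)
  show ?case unfolding e t using Suc by (auto simp: card_insert_if)
qed

lemma count_upt: "count_list [a..<b] i = (if a \<le> i \<and> i < b then 1 else 0)"
  by (induction b) (auto simp: upt_Suc)

lemma count_Sq:
  assumes n1: "1 \<le> n" and nm: "2*n \<le> m" and i1: "1 \<le> i" and inn: "i \<le> n" and km: "k \<le> m"
  defines "a \<equiv> count_list (take k (Sq n m)) i"
  shows "(k < i \<and> a = 0) \<or> (i \<le> k \<and> k + i \<le> 2*n \<and> a = 1) \<or> (2*n < k + i \<and> k \<le> 2*n \<and> a = 2)
       \<or> (2*n < k \<and> 2 \<le> a \<and> Qc (int n) (int (gcls n i)) (int i) (int (k - 2*n) + int i) (int a - 2))"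
proof -
  have A2: "rev [1..<Suc n] = pass 0 n" by (simp add: pass_def)
  have cA1: "count_list [1..<Suc n] i = 1" using i1 inn by (simp add: count_upt)
  consider (a) "k \<le> n" | (b) "n < k" "k \<le> 2*n" | (c) "2*n < k" by linarith
  then show ?thesis
  proof cases
    case a
    have "take k (Sq n m) = [1..<Suc k]" using a by (simp add: Sq_def take_upt del: upt_Suc)
    then have "a = (if i \<le> k then 1 else 0)" using i1 unfolding a_def by (simp add: count_upt del: upt_Suc)
    then show ?thesis using a inn by auto
  next
    case b
    have "take k (Sq n m) = [1..<Suc n] @ take (k - n) (pass 0 n)"
      using b by (simp add: Sq_def pass_def)
    then have "a = 1 + (if n - i < k - n then 1 else 0)"
      unfolding a_def using cA1 i1 inn by (simp add: count_take_pass)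
    then show ?thesis using b inn by auto
  next
    case c
    define q where "q = k - 2*n"
    have tk: "take k (Sq n m) = [1..<Suc n] @ pass 0 n @ take q (Tl n m)"
      using c km unfolding q_def by (simp add: Sq_def pass_def min_def mult_2)
    have cp: "count_list (pass 0 n) i = 1" using i1 inn by (simp add: count_pass)
    have aq: "a = 2 + count_list (take q (Tl n m)) i"
      unfolding a_def tk using cA1 cp by simp
    have ap: "agent_prop n i" using agent_ok n1 i1 inn by blast
    let ?g = "int (gcls n i)"
    have gr: "goodp (int n) ?g (int i) 0 0 (concat (replicate m (perI n)))"
      using goodp_rep[of "int n" ?g "int i" "perI n" 0 m] ap unfolding agent_prop_def by simp
    have ti: "toI (concat (replicate m (perN n))) = concat (replicate m (perI n))"
      by (simp add: toI_def perI_def map_concat)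
    have lh: "\<forall>(l,h)\<in>set (concat (replicate m (perN n))). l \<le> h" using perN_bounds[of n] by auto
    have Q: "Qc (int n) ?g (int i) (0 + int q + int i) (0 + int (count_list (take q (Tl n m)) i))"
      unfolding Tl_def
      by (rule main_count) (use gr ti lh in \<open>auto simp: Qc_def\<close>)
    show ?thesis using c Q aq unfolding q_def by simp
  qed
qed

lemma gcls_le8: "gcls n i \<le> 8"
  by (simp add: gcls_def)

lemma agent_sum:
  assumes n1: "1 \<le> n" and nm: "2*n \<le> m" and i1: "1 \<le> i" and inn: "i \<le> n"
    and v: "valid_disval m c"
  shows "(\<Sum>j\<in>alloc (Sq n m) i. c j) \<le> 8/5 * CS n m c"
proof -
  define g where "g = gcls n i"
  define \<alpha> where "\<alpha> = real g / (5 * real n)"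
  define \<beta> where "\<beta> = max 0 (1 - \<alpha> * real i)"
  define \<gamma> where "\<gamma> = 8/5 - \<alpha> * real n - \<beta>"
  have ap: "agent_prop n i" using agent_ok n1 i1 inn by blast
  have v1: "int g * (int i - 1) \<le> 6 * int n" and v2: "int g * (int n - int i) \<le> 3 * int n"
    using ap unfolding agent_prop_def g_def by auto
  have g8: "g \<le> 8" unfolding g_def by (rule gcls_le8)
  note P = cert_params[OF i1 inn g8 v2 \<alpha>_def \<beta>_def \<gamma>_def]
  have len: "length (Sq n m) = m" using length_Sq n1 nm by blast
  have AS: "alloc (Sq n m) i \<subseteq> {1..m}" unfolding alloc_def len by auto
  show ?thesis
  proof (rule agent_bound[OF v n1 _ AS P])
    show "n + 1 \<le> m" using n1 nm by linarith
    fix k assume km: "k \<le> m"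
    have "card (alloc (Sq n m) i \<inter> {1..k}) = count_list (take k (Sq n m)) i"
      unfolding alloc_def using card_count[of k "Sq n m" i] km len by simp
    moreover have "real (count_list (take k (Sq n m)) i) \<le> \<alpha> * real k + (if 1 \<le> k then \<beta> else 0)
               + (if n \<le> k then \<gamma> else 0) + (if n + 1 \<le> k then \<gamma> else 0)"
      by (rule cert_ok[OF i1 inn g8 v1 v2 _ \<alpha>_def \<beta>_def \<gamma>_def])
         (use count_Sq[OF n1 nm i1 inn km] in \<open>simp add: g_def\<close>)
    ultimately show "real (card (alloc (Sq n m) i \<inter> {1..k})) \<le> \<alpha> * real k + (if 1 \<le> k then \<beta> else 0)
               + (if n \<le> k then \<gamma> else 0) + (if n + 1 \<le> k then \<gamma> else 0)" by simp
  qed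
qed

lemma ratio_Sq: assumes n1: "1 \<le> n" and nm: "2*n \<le> m"
  shows "ratio n (Sq n m) \<le> ereal (8/5)"
  unfolding ratio_def
proof (rule SUP_least)
  fix p assume "p \<in> {(i, c). i \<in> {1..n} \<and> valid_disval (length (Sq n m)) c \<and> 0 < CS n (length (Sq n m)) c}"
  then obtain i c where p: "p = (i, c)" and i: "i \<in> {1..n}" and v: "valid_disval m c" and cs: "0 < CS n m c"
    using length_Sq[OF n1 nm] by auto
  have "(\<Sum>j\<in>alloc (Sq n m) i. c j) \<le> 8/5 * CS n m c"
    using agent_sum[OF n1 nm _ _ v] i by auto
  then have "(\<Sum>j\<in>alloc (Sq n m) i. c j) / CS n m c \<le> 8/5"
    using cs by (simp add: pos_divide_le_eq)
  then show "ereal ((\<Sum>j\<in>alloc (Sq n m) (fst p). snd p j) / CS n (length (Sq n m)) (snd p)) \<le> ereal (8/5)"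
    using p length_Sq[OF n1 nm] by simp
qed

theorem theorem6:
  fixes n :: nat
  assumes "1 \<le> n"
  shows "hat_r n \<le> ereal (8 / 5)"
  unfolding hat_r_def
proof (rule SUP_least)
  fix m assume "m \<in> {m. 2 * n \<le> m}"
  then have nm: "2*n \<le> m" by simp
  have fin: "finite {S. ridge n m S}"
  proof (rule finite_subset)
    show "{S. ridge n m S} \<subseteq> {xs. set xs \<subseteq> {1..n} \<and> length xs = m}"
      by (auto simp: ridge_def picking_order_def)
    show "finite {xs. set xs \<subseteq> {1..n} \<and> length xs = m}"
      by (rule finite_lists_length_eq) simp
  qed
  have mem: "Sq n m \<in> {S. ridge n m S}" using ridge_Sq[OF assms nm] by simp
  have "hat_r_nm n m \<le> ratio n (Sq n m)"
    unfolding hat_r_nm_def using fin mem by (intro Min_le) auto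
  also have "\<dots> \<le> ereal (8/5)" using ratio_Sq[OF assms nm] .
  finally show "hat_r_nm n m \<le> ereal (8/5)" .
qed

end
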